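(* Let $\boldsymbol{\mu}$ be a bandit model with $\mu_1>\mu_a$ for all $a\neq1$ and let $c_1,\dots,c_K>0$. For every $\boldsymbol{w}\in\Sigma_K$, \[ \inf_{\boldsymbol{\lambda}\in\mathrm{Alt}(\boldsymbol{\mu})}\sum_{a=1}^K\frac{w_a}{c_a}d(\mu_a,\lambda_a)=\min_{a\neq1}\left(\frac{w_1}{c_1}+\frac{w_a}{c_a}\right)I_{\frac{w_1/c_1}{w_1/c_1+w_a/c_a}}(\mu_1,\mu_a). \] Consequently \[ T^*(\boldsymbol{\mu})^{-1}=\sup_{\boldsymbol{w}\in\Sigma_K}\min_{a\neq1}\left(\frac{w_1}{c_1}+\frac{w_a}{c_a}\right)I_{\frac{w_1/c_1}{w_1/c_1+w_a/c_a}}(\mu_1,\mu_a),\qquad \boldsymbol{w}^*(\boldsymbol{\mu})=\arg\max_{\boldsymbol{w}\in\Sigma_K}\min_{a\neq1}\left(\frac{w_1}{c_1}+\frac{w_a}{c_a}\right)I_{\frac{w_1/c_1}{w_1/c_1+w_a/c_a}}(\mu_1,\mu_a). \]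
   Context: Rewards of the arms belong to a one-parameter natural exponential family $\{h(x)\exp(\theta_\mu x-b(\theta_\mu))\}$ parametrized by its mean $\mu$; $d(\mu,\mu')$ is the KL divergence between the members with means $\mu,\mu'$. $\Sigma_K$ is the probability simplex in $\mathbb{R}^K$. $\mathrm{Alt}(\boldsymbol{\mu})$ is the set of mean vectors $\boldsymbol{\lambda}$ of the family whose (unique) best arm differs from arm $1$, i.e. $\mathrm{Alt}(\boldsymbol{\mu})=\bigcup_{a\neq1}\{\boldsymbol{\lambda}:\lambda_a>\lambda_1\}$. For $\alpha\in[0,1]$, $I_\alpha(x,y)=\alpha\,d(x,\alpha x+(1-\alpha)y)+(1-\alpha)\,d(y,\alpha x+(1-\alpha)y)$. $T^*(\boldsymbol{\mu})^{-1}=\sup_{\boldsymbol{w}\in\Sigma_K}\inf_{\boldsymbol{\lambda}\in\mathrm{Alt}(\boldsymbol{\mu})}\sum_a\frac{w_a}{c_a}d(\mu_a,\lambda_a)$ and $\boldsymbol{w}^*(\boldsymbol{\mu})$ is the maximizing $\boldsymbol{w}$. *)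

theory Defs
  imports "HOL-Analysis.Analysis"
begin

text \<open>A one-parameter natural exponential family h(x) exp(theta x - b(theta)),
  theta ranging over the (open, interval) natural parameter space Theta, is
  represented through its log-partition function b.  Non-degeneracy of the
  family means b is strictly convex; b is differentiable and the mean of the
  member with natural parameter theta is b'(theta).\<close>

definition expfam :: "real set \<Rightarrow> (real \<Rightarrow> real) \<Rightarrow> bool" where
  "expfam \<Theta> b \<longleftrightarrow> open \<Theta> \<and> is_interval \<Theta> \<and> \<Theta> \<noteq> {} \<and>
     (\<forall>\<theta>\<in>\<Theta>. b differentiable (at \<theta>)) \<and> strict_mono_on \<Theta> (deriv b)"

definition means :: "real set \<Rightarrow> (real \<Rightarrow> real) \<Rightarrow> real set" where
  "means \<Theta> b = deriv b ` \<Theta>"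

definition theta_of :: "real set \<Rightarrow> (real \<Rightarrow> real) \<Rightarrow> real \<Rightarrow> real" where
  "theta_of \<Theta> b m = inv_into \<Theta> (deriv b) m"

text \<open>KL divergence between the members with means x and y:
  KL(P_theta || P_theta') = (theta - theta') x - b(theta) + b(theta').\<close>
definition kl :: "real set \<Rightarrow> (real \<Rightarrow> real) \<Rightarrow> real \<Rightarrow> real \<Rightarrow> real" where
  "kl \<Theta> b x y = b (theta_of \<Theta> b y) - b (theta_of \<Theta> b x)
                   - x * (theta_of \<Theta> b y - theta_of \<Theta> b x)"

definition I_fun :: "real set \<Rightarrow> (real \<Rightarrow> real) \<Rightarrow> real \<Rightarrow> real \<Rightarrow> real \<Rightarrow> real" where
  "I_fun \<Theta> b \<alpha> x y = \<alpha> * kl \<Theta> b x (\<alpha> * x + (1 - \<alpha>) * y)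
                       + (1 - \<alpha>) * kl \<Theta> b y (\<alpha> * x + (1 - \<alpha>) * y)"

text \<open>Arms are indexed by 1..K; vectors are functions on nat, relevant on {1..K}.\<close>
definition Sigma_K :: "nat \<Rightarrow> (nat \<Rightarrow> real) set" where
  "Sigma_K K = {w. (\<forall>a\<in>{1..K}. 0 \<le> w a) \<and> (\<forall>a. a \<notin> {1..K} \<longrightarrow> w a = 0)
                   \<and> (\<Sum>a=1..K. w a) = 1}"

definition Alt :: "real set \<Rightarrow> (real \<Rightarrow> real) \<Rightarrow> nat \<Rightarrow> (nat \<Rightarrow> real) set" where
  "Alt \<Theta> b K = {l. (\<forall>a\<in>{1..K}. l a \<in> means \<Theta> b) \<and> (\<exists>a\<in>{1..K}. a \<noteq> 1 \<and> l a > l 1)}"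

definition alt_obj :: "real set \<Rightarrow> (real \<Rightarrow> real) \<Rightarrow> nat \<Rightarrow> (nat \<Rightarrow> real)
                        \<Rightarrow> (nat \<Rightarrow> real) \<Rightarrow> (nat \<Rightarrow> real) \<Rightarrow> real" where
  "alt_obj \<Theta> b K c \<mu> w = (INF l\<in>Alt \<Theta> b K. \<Sum>a=1..K. w a / c a * kl \<Theta> b (\<mu> a) (l a))"

definition pair_obj :: "real set \<Rightarrow> (real \<Rightarrow> real) \<Rightarrow> nat \<Rightarrow> (nat \<Rightarrow> real)
                        \<Rightarrow> (nat \<Rightarrow> real) \<Rightarrow> (nat \<Rightarrow> real) \<Rightarrow> real" where
  "pair_obj \<Theta> b K c \<mu> w = Min ((\<lambda>a. (w 1 / c 1 + w a / c a) *
        I_fun \<Theta> b ((w 1 / c 1) / (w 1 / c 1 + w a / c a)) (\<mu> 1) (\<mu> a)) ` {2..K})"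

definition Tstar_inv :: "real set \<Rightarrow> (real \<Rightarrow> real) \<Rightarrow> nat \<Rightarrow> (nat \<Rightarrow> real) \<Rightarrow> (nat \<Rightarrow> real) \<Rightarrow> real" where
  "Tstar_inv \<Theta> b K c \<mu> = (SUP w\<in>Sigma_K K. alt_obj \<Theta> b K c \<mu> w)"

definition wstar :: "real set \<Rightarrow> (real \<Rightarrow> real) \<Rightarrow> nat \<Rightarrow> (nat \<Rightarrow> real) \<Rightarrow> (nat \<Rightarrow> real) \<Rightarrow> (nat \<Rightarrow> real) set" where
  "wstar \<Theta> b K c \<mu> = {w\<in>Sigma_K K. \<forall>v\<in>Sigma_K K. alt_obj \<Theta> b K c \<mu> v \<le> alt_obj \<Theta> b K c \<mu> w}"

end

theory Submission imports Defs begin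
lemma ef_open: "expfam \<Theta> b \<Longrightarrow> open \<Theta>" by (simp add: expfam_def)
lemma ef_int: "expfam \<Theta> b \<Longrightarrow> is_interval \<Theta>" by (simp add: expfam_def)
lemma ef_smono: "expfam \<Theta> b \<Longrightarrow> strict_mono_on \<Theta> (deriv b)" by (simp add: expfam_def)

lemma ef_deriv: assumes "expfam \<Theta> b" "t \<in> \<Theta>"
  shows "(b has_real_derivative deriv b t) (at t)"
  using assms DERIV_deriv_iff_real_differentiable by (auto simp: expfam_def)

lemma ef_between: assumes "expfam \<Theta> b" "x \<in> \<Theta>" "y \<in> \<Theta>" "x \<le> z" "z \<le> y"
  shows "z \<in> \<Theta>"
  using assms ef_int[OF assms(1)] unfolding is_interval_1 by blast

lemma ef_mvt: assumes ef: "expfam \<Theta> b" and t: "t \<in> \<Theta>" "t' \<in> \<Theta>" "t < t'"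
  shows "\<exists>z. t < z \<and> z < t' \<and> b t' - b t = (t' - t) * deriv b z"
proof -
  have cont: "continuous_on {t..t'} b"
    apply (rule continuous_at_imp_continuous_on)
    using ef_deriv[OF ef] ef_between[OF ef t(1,2)] DERIV_isCont by (meson atLeastAtMost_iff)
  have "\<And>x. t < x \<Longrightarrow> x < t' \<Longrightarrow> b differentiable (at x)"
    using ef_deriv[OF ef] ef_between[OF ef t(1,2)] real_differentiable_def
    by (metis less_eq_real_def)
  from MVT[OF t(3) cont this] obtain l z where z: "t < z" "z < t'" "DERIV b z :> l" "b t' - b t = (t' - t) * l"
    by blast
  have "z \<in> \<Theta>" using ef_between[OF ef t(1,2)] z by auto
  then have "l = deriv b z" using z(3) ef_deriv[OF ef] DERIV_unique by blast
  then show ?thesis using z by blast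
qed

lemma ef_sub: assumes ef: "expfam \<Theta> b" and t: "t \<in> \<Theta>" "t' \<in> \<Theta>"
  shows "b t' - b t \<ge> deriv b t * (t' - t)"
proof (cases t t' rule: linorder_cases)
  case less
  then obtain z where z: "t < z" "z < t'" "b t' - b t = (t' - t) * deriv b z"
    using ef_mvt[OF ef t] by blast
  have "z \<in> \<Theta>" using ef_between[OF ef t] z by auto
  then have "deriv b t < deriv b z" using ef_smono[OF ef] t z strict_mono_onD by blast
  then show ?thesis using z less by (simp add: mult.commute mult_right_mono)
next
  case equal then show ?thesis by simp
next
  case greater
  then obtain z where z: "t' < z" "z < t" "b t - b t' = (t - t') * deriv b z"
    using ef_mvt[OF ef t(2,1)] by blast
  have "z \<in> \<Theta>" using ef_between[OF ef t(2,1)] z by auto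
  then have "deriv b z < deriv b t" using ef_smono[OF ef] t z strict_mono_onD by blast
  then have "(t - t') * deriv b z \<le> (t - t') * deriv b t" using greater by simp
  then show ?thesis using z by (simp add: algebra_simps)
qed

lemma theta_in: assumes ef: "expfam \<Theta> b" and m: "m \<in> means \<Theta> b"
  shows "theta_of \<Theta> b m \<in> \<Theta>" "deriv b (theta_of \<Theta> b m) = m"
  using m unfolding theta_of_def means_def by (auto intro: inv_into_into f_inv_into_f)

lemma theta_deriv: assumes ef: "expfam \<Theta> b" and t: "t \<in> \<Theta>"
  shows "theta_of \<Theta> b (deriv b t) = t"
  unfolding theta_of_def using strict_mono_on_imp_inj_on[OF ef_smono[OF ef]] t
  by (simp add: inv_into_f_f)

lemma theta_mono: assumes ef: "expfam \<Theta> b" and x: "x \<in> means \<Theta> b" "y \<in> means \<Theta> b" "x \<le> y"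
  shows "theta_of \<Theta> b x \<le> theta_of \<Theta> b y"
proof (rule ccontr)
  assume "\<not> ?thesis"
  then have "deriv b (theta_of \<Theta> b y) < deriv b (theta_of \<Theta> b x)"
    using ef_smono[OF ef] theta_in[OF ef] x strict_mono_onD by (metis not_le)
  then show False using theta_in[OF ef] x by simp
qed

lemma kl_self[simp]: "kl \<Theta> b x x = 0" by (simp add: kl_def)

lemma kl_nonneg: assumes ef: "expfam \<Theta> b" and x: "x \<in> means \<Theta> b" "z \<in> means \<Theta> b"
  shows "kl \<Theta> b x z \<ge> 0"
  using ef_sub[OF ef theta_in(1)[OF ef x(1)] theta_in(1)[OF ef x(2)]] theta_in(2)[OF ef x(1)]
  unfolding kl_def by simp

lemma kl_mono: assumes ef: "expfam \<Theta> b" and x: "x \<in> means \<Theta> b" "z \<in> means \<Theta> b" "u \<in> means \<Theta> b"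
   and o: "(x \<le> z \<and> z \<le> u) \<or> (u \<le> z \<and> z \<le> x)"
  shows "kl \<Theta> b u z \<le> kl \<Theta> b u x"
proof -
  define tx tz where "tx = theta_of \<Theta> b x" and "tz = theta_of \<Theta> b z"
  have s: "b tx - b tz \<ge> z * (tx - tz)"
    using ef_sub[OF ef theta_in(1)[OF ef x(2)] theta_in(1)[OF ef x(1)]] theta_in(2)[OF ef x(2)]
    unfolding tx_def tz_def by simp
  have "(tz - tx) * (u - z) \<ge> 0"
    using o theta_mono[OF ef] x unfolding tx_def tz_def
    by (metis diff_ge_0_iff_ge mult_nonneg_nonneg mult_nonpos_nonpos diff_le_0_iff_le)
  then have "kl \<Theta> b u x - kl \<Theta> b u z \<ge> 0"
    using s unfolding kl_def tx_def[symmetric] tz_def[symmetric] by (simp add: algebra_simps)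
  then show ?thesis by simp
qed

lemma means_between: assumes ef: "expfam \<Theta> b" and x: "x \<in> means \<Theta> b" "y \<in> means \<Theta> b"
  and m: "x \<le> m" "m \<le> y"
  shows "m \<in> means \<Theta> b"
proof -
  consider "m = x" | "m = y" | "x < m" "m < y" using m by linarith
  then show ?thesis
  proof cases
    case 3
    define tx ty where "tx = theta_of \<Theta> b x" and "ty = theta_of \<Theta> b y"
    have txi: "tx \<in> \<Theta>" "deriv b tx = x" and tyi: "ty \<in> \<Theta>" "deriv b ty = y"
      using theta_in[OF ef] x unfolding tx_def ty_def by auto
    have "tx \<le> ty" using theta_mono[OF ef x] 3 unfolding tx_def ty_def by simp
    moreover have "tx \<noteq> ty" using txi tyi 3 by auto
    ultimately have lt: "tx < ty" by simp
    have inT: "\<And>t. tx \<le> t \<Longrightarrow> t \<le> ty \<Longrightarrow> t \<in> \<Theta>" using ef_between[OF ef txi(1) tyi(1)] by blast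
    define f where "f t = b t - m * t" for t
    have fd: "\<And>t. t \<in> \<Theta> \<Longrightarrow> DERIV f t :> deriv b t - m"
      unfolding f_def using ef_deriv[OF ef] by (auto intro!: derivative_eq_intros)
    have "continuous_on {tx..ty} f"
      apply (rule continuous_at_imp_continuous_on)
      using fd inT DERIV_isCont by (meson atLeastAtMost_iff)
    then obtain ts where ts: "ts \<in> {tx..ty}" "\<And>t. t \<in> {tx..ty} \<Longrightarrow> f ts \<le> f t"
      using continuous_attains_inf[of "{tx..ty}" f] lt by auto
    have "ts \<noteq> tx"
    proof
      assume e: "ts = tx"
      obtain d where d: "d > 0" "\<And>h. h > 0 \<Longrightarrow> h < d \<Longrightarrow> f tx > f (tx + h)"
        using DERIV_neg_dec_right[OF fd[OF txi(1)]] txi 3 by auto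
      define h where "h = min (d/2) (ty - tx)"
      have "f tx > f (tx + h)" using d lt unfolding h_def by auto
      moreover have "f ts \<le> f (tx + h)" using ts(2)[of "tx + h"] d lt unfolding h_def by auto
      ultimately show False using e by simp
    qed
    moreover have "ts \<noteq> ty"
    proof
      assume e: "ts = ty"
      obtain d where d: "d > 0" "\<And>h. h > 0 \<Longrightarrow> h < d \<Longrightarrow> f (ty - h) < f ty"
        using DERIV_pos_inc_left[OF fd[OF tyi(1)]] tyi 3 by auto
      define h where "h = min (d/2) (ty - tx)"
      have "f (ty - h) < f ty" using d lt unfolding h_def by auto
      moreover have "f ts \<le> f (ty - h)" using ts(2)[of "ty - h"] d lt unfolding h_def by auto
      ultimately show False using e by simp
    qed
    ultimately have int: "tx < ts" "ts < ty" using ts(1) by auto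
    have tsT: "ts \<in> \<Theta>" using inT ts(1) by auto
    have "deriv b ts - m = 0"
    proof (rule DERIV_local_min[OF fd[OF tsT]])
      show "0 < min (ts - tx) (ty - ts)" using int by simp
      show "\<forall>y. \<bar>ts - y\<bar> < min (ts - tx) (ty - ts) \<longrightarrow> f ts \<le> f y"
        by (intro allI impI ts(2)) (auto simp: abs_if split: if_splits)
    qed
    then show ?thesis using tsT unfolding means_def by force
  qed (use x in auto)
qed

lemma three_point:
  assumes "s1 + sa > 0" "m = (s1 * u1 + sa * ua) / (s1 + sa)"
  shows "s1 * kl \<Theta> b u1 z + sa * kl \<Theta> b ua z
       = s1 * kl \<Theta> b u1 m + sa * kl \<Theta> b ua m + (s1 + sa) * kl \<Theta> b m z"
proof -
  have e: "m * (s1 + sa) = s1 * u1 + sa * ua" using assms by (simp add: field_simps)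
  define tz tm where "tz = theta_of \<Theta> b z" and "tm = theta_of \<Theta> b m"
  have e1: "m * (s1 + sa) * tz = (s1 * u1 + sa * ua) * tz" using e by simp
  have e2: "m * (s1 + sa) * tm = (s1 * u1 + sa * ua) * tm" using e by simp
  show ?thesis unfolding kl_def tz_def[symmetric] tm_def[symmetric]
    using e1 e2 by (simp add: algebra_simps)
qed

lemma alpha_props:
  fixes s1 sa :: real
  assumes "s1 \<ge> 0" "sa \<ge> 0" "ua \<le> u1"
  defines "\<alpha> \<equiv> s1 / (s1 + sa)"
  shows "ua \<le> \<alpha> * u1 + (1 - \<alpha>) * ua" "\<alpha> * u1 + (1 - \<alpha>) * ua \<le> u1"
    "s1 + sa > 0 \<Longrightarrow> \<alpha> * u1 + (1 - \<alpha>) * ua = (s1 * u1 + sa * ua) / (s1 + sa)"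
proof -
  have a: "0 \<le> \<alpha>" "\<alpha> \<le> 1" using assms unfolding \<alpha>_def
    by (auto simp: divide_simps)
  have "ua = \<alpha> * ua + (1 - \<alpha>) * ua" by (simp add: algebra_simps)
  also have "\<dots> \<le> \<alpha> * u1 + (1 - \<alpha>) * ua" using mult_left_mono[OF assms(3) a(1)] by simp
  finally show "ua \<le> \<alpha> * u1 + (1 - \<alpha>) * ua" .
  have "\<alpha> * u1 + (1 - \<alpha>) * ua \<le> \<alpha> * u1 + (1 - \<alpha>) * u1" using mult_left_mono[OF assms(3), of "1 - \<alpha>"] a by simp
  also have "\<dots> = u1" by (simp add: algebra_simps)
  finally show "\<alpha> * u1 + (1 - \<alpha>) * ua \<le> u1" .
  assume p: "s1 + sa > 0"
  then have "1 - \<alpha> = sa / (s1 + sa)" unfolding \<alpha>_def by (simp add: field_simps)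
  then show "\<alpha> * u1 + (1 - \<alpha>) * ua = (s1 * u1 + sa * ua) / (s1 + sa)"
    unfolding \<alpha>_def by (simp add: add_divide_distrib)
qed

lemma pair_value:
  fixes s1 sa :: real
  assumes "s1 \<ge> 0" "sa \<ge> 0"
  defines "\<alpha> \<equiv> s1 / (s1 + sa)"
  shows "(s1 + sa) * I_fun \<Theta> b \<alpha> u1 ua
     = s1 * kl \<Theta> b u1 (\<alpha> * u1 + (1 - \<alpha>) * ua) + sa * kl \<Theta> b ua (\<alpha> * u1 + (1 - \<alpha>) * ua)"
proof (cases "s1 + sa = 0")
  case True
  then have "s1 = 0" "sa = 0" using assms by auto
  then show ?thesis by simp
next
  case False
  then have "(s1 + sa) * \<alpha> = s1" "(s1 + sa) * (1 - \<alpha>) = sa" unfolding \<alpha>_def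
    by (auto simp: field_simps)
  then show ?thesis unfolding I_fun_def by (simp add: distrib_left mult.assoc[symmetric])
qed

lemma pair_lower:
  fixes s1 sa :: real
  assumes ef: "expfam \<Theta> b" and u: "u1 \<in> means \<Theta> b" "ua \<in> means \<Theta> b" "ua < u1"
    and s: "s1 \<ge> 0" "sa \<ge> 0" and xy: "x \<in> means \<Theta> b" "y \<in> means \<Theta> b" "x < y"
  defines "\<alpha> \<equiv> s1 / (s1 + sa)"
  shows "s1 * kl \<Theta> b u1 (\<alpha> * u1 + (1 - \<alpha>) * ua) + sa * kl \<Theta> b ua (\<alpha> * u1 + (1 - \<alpha>) * ua)
     \<le> s1 * kl \<Theta> b u1 x + sa * kl \<Theta> b ua y"
proof (cases "s1 + sa = 0")
  case True
  then have "s1 = 0" "sa = 0" using s by auto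
  then show ?thesis by simp
next
  case False
  then have pos: "s1 + sa > 0" using s by simp
  define m where "m = \<alpha> * u1 + (1 - \<alpha>) * ua"
  have mb: "ua \<le> m" "m \<le> u1" "m = (s1 * u1 + sa * ua) / (s1 + sa)"
    using alpha_props[OF s, of ua u1] u pos unfolding m_def \<alpha>_def by auto
  have mM: "m \<in> means \<Theta> b" using means_between[OF ef u(2) u(1) mb(1,2)] .
  define z where "z = min (max x ua) u1"
  have zb: "ua \<le> z" "z \<le> u1" unfolding z_def using u by auto
  have zM: "z \<in> means \<Theta> b" using means_between[OF ef u(2) u(1) zb] .
  have k1: "kl \<Theta> b u1 z \<le> kl \<Theta> b u1 x"
  proof (cases "x \<ge> u1")
    case True
    then have "z = u1" unfolding z_def using u by auto
    then show ?thesis using kl_nonneg[OF ef u(1) xy(1)] by simp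
  next
    case False
    then have "x \<le> z" "z \<le> u1" unfolding z_def using u by auto
    then show ?thesis using kl_mono[OF ef xy(1) zM u(1)] by blast
  qed
  have k2: "kl \<Theta> b ua z \<le> kl \<Theta> b ua y"
  proof (cases "y \<le> ua")
    case True
    then have "z = ua" unfolding z_def using u xy by auto
    then show ?thesis using kl_nonneg[OF ef u(2) xy(2)] by simp
  next
    case False
    then have "ua \<le> z" "z \<le> y" unfolding z_def using u xy by auto
    then show ?thesis using kl_mono[OF ef xy(2) zM u(2)] by blast
  qed
  have "s1 * kl \<Theta> b u1 m + sa * kl \<Theta> b ua m \<le> s1 * kl \<Theta> b u1 z + sa * kl \<Theta> b ua z"
    using three_point[OF pos mb(3), of \<Theta> b z] kl_nonneg[OF ef mM zM] pos by simp
  also have "\<dots> \<le> s1 * kl \<Theta> b u1 x + sa * kl \<Theta> b ua y"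
    using k1 k2 s by (intro add_mono mult_left_mono) auto
  finally show ?thesis unfolding m_def .
qed

lemma pair_upper:
  fixes s1 sa :: real
  assumes ef: "expfam \<Theta> b" and u: "u1 \<in> means \<Theta> b" "ua \<in> means \<Theta> b"
    and mM: "m \<in> means \<Theta> b" and e: "e > 0"
  shows "\<exists>t>0. theta_of \<Theta> b m - t \<in> \<Theta> \<and> theta_of \<Theta> b m + t \<in> \<Theta> \<and>
     s1 * kl \<Theta> b u1 (deriv b (theta_of \<Theta> b m - t)) + sa * kl \<Theta> b ua (deriv b (theta_of \<Theta> b m + t))
       < s1 * kl \<Theta> b u1 m + sa * kl \<Theta> b ua m + e"
proof -
  define tm where "tm = theta_of \<Theta> b m"
  define t1 where "t1 = theta_of \<Theta> b u1"
  define ta where "ta = theta_of \<Theta> b ua"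
  have tmT: "tm \<in> \<Theta>" using theta_in[OF ef mM] unfolding tm_def by simp
  define g where "g t = s1 * (b (tm - t) - b t1 - u1 * ((tm - t) - t1))
                      + sa * (b (tm + t) - b ta - ua * ((tm + t) - ta))" for t
  have cb: "isCont b tm" using ef_deriv[OF ef tmT] DERIV_isCont by blast
  have c1: "isCont (\<lambda>t. b (tm - t)) 0"
    by (rule isCont_o2[where f="\<lambda>t. tm - t"]) (use cb in \<open>auto intro!: continuous_intros\<close>)
  have c2: "isCont (\<lambda>t. b (tm + t)) 0"
    by (rule isCont_o2[where f="\<lambda>t. tm + t"]) (use cb in \<open>auto intro!: continuous_intros\<close>)
  have "isCont g 0" unfolding g_def using c1 c2 by (intro continuous_intros) auto
  then have "(g \<longlongrightarrow> g 0) (at_right 0)"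
    by (simp add: isCont_def filterlim_at_split)
  then have ev1: "eventually (\<lambda>t. g t < g 0 + e) (at_right 0)"
    using e by (intro order_tendstoD(2)) auto
  obtain r where r: "r > 0" "ball tm r \<subseteq> \<Theta>"
    using ef_open[OF ef] tmT open_contains_ball by blast
  have ev2: "eventually (\<lambda>t. t < r) (at_right (0::real))"
    using r(1) eventually_at_right_field by blast
  have "eventually (\<lambda>t. t > 0 \<and> t < r \<and> g t < g 0 + e) (at_right (0::real))"
    using ev1 ev2 eventually_at_right_less[of "0::real"] by eventually_elim auto
  then obtain t where t: "t > 0" "t < r" "g t < g 0 + e"
    using eventually_happens'[OF trivial_limit_at_right_real] by blast
  have tT: "tm - t \<in> \<Theta>" "tm + t \<in> \<Theta>" using r t by (auto simp: dist_real_def subset_iff)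
  have "s1 * kl \<Theta> b u1 (deriv b (tm - t)) + sa * kl \<Theta> b ua (deriv b (tm + t)) = g t"
    unfolding g_def kl_def theta_deriv[OF ef tT(1)] theta_deriv[OF ef tT(2)] t1_def ta_def ..
  moreover have "g 0 = s1 * kl \<Theta> b u1 m + sa * kl \<Theta> b ua m"
    unfolding g_def kl_def tm_def t1_def ta_def by simp
  ultimately show ?thesis using t tT unfolding tm_def by auto
qed

lemma main_eq:
  fixes \<Theta> :: "real set" and b :: "real \<Rightarrow> real" and K :: nat
    and c \<mu> :: "nat \<Rightarrow> real"
  assumes fam: "expfam \<Theta> b"
    and K: "K \<ge> 2"
    and mu_in: "\<forall>a\<in>{1..K}. \<mu> a \<in> means \<Theta> b"
    and best: "\<forall>a\<in>{2..K}. \<mu> 1 > \<mu> a"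
    and c_pos: "\<forall>a\<in>{1..K}. c a > 0"
    and w: "w \<in> Sigma_K K"
  shows "alt_obj \<Theta> b K c \<mu> w = pair_obj \<Theta> b K c \<mu> w"
proof -
  define S where "S l = (\<Sum>a=1..K. w a / c a * kl \<Theta> b (\<mu> a) (l a))" for l
  define F where "F a = (w 1 / c 1 + w a / c a) *
        I_fun \<Theta> b ((w 1 / c 1) / (w 1 / c 1 + w a / c a)) (\<mu> 1) (\<mu> a)" for a
  define P where "P = Min (F ` {2..K})"
  have P: "pair_obj \<Theta> b K c \<mu> w = P" unfolding P_def F_def pair_obj_def ..
  have A: "alt_obj \<Theta> b K c \<mu> w = (INF l\<in>Alt \<Theta> b K. S l)" unfolding alt_obj_def S_def ..
  have wn: "\<And>a. a \<in> {1..K} \<Longrightarrow> w a / c a \<ge> 0" using w c_pos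
    unfolding Sigma_K_def by (auto intro!: divide_nonneg_pos)
  have one: "1 \<in> {1..K}" using K by auto
  have m1: "\<mu> 1 \<in> means \<Theta> b" using mu_in one by blast
  have Fv: "F a = w 1 / c 1 * kl \<Theta> b (\<mu> 1) (\<alpha> * \<mu> 1 + (1 - \<alpha>) * \<mu> a)
             + w a / c a * kl \<Theta> b (\<mu> a) (\<alpha> * \<mu> 1 + (1 - \<alpha>) * \<mu> a)"
    if "a \<in> {2..K}" "\<alpha> = (w 1 / c 1) / (w 1 / c 1 + w a / c a)" for a \<alpha>
    unfolding F_def that(2) using wn[OF one] wn[of a] that(1) by (intro pair_value) auto
  have S2: "S l = w 1 / c 1 * kl \<Theta> b (\<mu> 1) (l 1) + w a / c a * kl \<Theta> b (\<mu> a) (l a)"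
    if "a \<in> {2..K}" "\<forall>j\<in>{1..K} - {1, a}. l j = \<mu> j" for a l
  proof -
    have "S l = (\<Sum>j\<in>{1, a}. w j / c j * kl \<Theta> b (\<mu> j) (l j))"
      unfolding S_def using that one by (intro sum.mono_neutral_right) auto
    also have "\<dots> = w 1 / c 1 * kl \<Theta> b (\<mu> 1) (l 1) + w a / c a * kl \<Theta> b (\<mu> a) (l a)"
      using that(1) by simp
    finally show ?thesis .
  qed
  have lower: "P \<le> S l" if l: "l \<in> Alt \<Theta> b K" for l
  proof -
    obtain a where a: "a \<in> {1..K}" "a \<noteq> 1" "l a > l 1" and lM: "\<forall>j\<in>{1..K}. l j \<in> means \<Theta> b"
      using l unfolding Alt_def by blast
    have a2: "a \<in> {2..K}" using a by auto
    define \<alpha> where "\<alpha> = (w 1 / c 1) / (w 1 / c 1 + w a / c a)"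
    have nn: "0 \<le> w j / c j * kl \<Theta> b (\<mu> j) (l j)" if "j \<in> {1..K}" for j
      using wn[OF that] kl_nonneg[OF fam] lM mu_in that by (intro mult_nonneg_nonneg) auto
    have "P \<le> F a" unfolding P_def using a2 by (intro Min_le) auto
    also have "\<dots> \<le> w 1 / c 1 * kl \<Theta> b (\<mu> 1) (l 1) + w a / c a * kl \<Theta> b (\<mu> a) (l a)"
      unfolding Fv[OF a2 \<alpha>_def] \<alpha>_def
      using a a2 lM one mu_in best wn[OF one] wn[OF a(1)]
      by (intro pair_lower[OF fam]) auto
    also have "\<dots> = (\<Sum>j\<in>{1, a}. w j / c j * kl \<Theta> b (\<mu> j) (l j))"
      using a by simp
    also have "\<dots> \<le> S l" unfolding S_def
      using a one nn by (intro sum_mono2) auto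
    finally show ?thesis .
  qed
  have upper: "\<exists>l\<in>Alt \<Theta> b K. S l < P + e" if e: "e > 0" for e
  proof -
    have "P \<in> F ` {2..K}" unfolding P_def using K by (intro Min_in) auto
    then obtain a where a2: "a \<in> {2..K}" and Pa: "P = F a" by blast
    have a: "a \<in> {1..K}" "a \<noteq> 1" using a2 by auto
    define \<alpha> where "\<alpha> = (w 1 / c 1) / (w 1 / c 1 + w a / c a)"
    define m where "m = \<alpha> * \<mu> 1 + (1 - \<alpha>) * \<mu> a"
    have ma: "\<mu> a \<in> means \<Theta> b" using mu_in a by blast
    have "\<mu> a \<le> \<mu> 1" using bspec[OF best a2] by simp
    note ap = alpha_props(1,2)[OF wn[OF one] wn[OF a(1)] this, folded \<alpha>_def]
    have mb: "\<mu> a \<le> m" "m \<le> \<mu> 1" unfolding m_def using ap by auto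
    have mM: "m \<in> means \<Theta> b" using means_between[OF fam ma m1 mb] .
    obtain t where t: "t > 0" "theta_of \<Theta> b m - t \<in> \<Theta>" "theta_of \<Theta> b m + t \<in> \<Theta>"
      "w 1 / c 1 * kl \<Theta> b (\<mu> 1) (deriv b (theta_of \<Theta> b m - t))
        + w a / c a * kl \<Theta> b (\<mu> a) (deriv b (theta_of \<Theta> b m + t))
       < w 1 / c 1 * kl \<Theta> b (\<mu> 1) m + w a / c a * kl \<Theta> b (\<mu> a) m + e"
      using pair_upper[OF fam m1 ma mM e] by blast
    define l where "l = \<mu>(1 := deriv b (theta_of \<Theta> b m - t), a := deriv b (theta_of \<Theta> b m + t))"
    have l1: "l 1 = deriv b (theta_of \<Theta> b m - t)" and la: "l a = deriv b (theta_of \<Theta> b m + t)"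
      unfolding l_def using a by auto
    have "l a > l 1" unfolding l1 la
      using strict_mono_onD[OF ef_smono[OF fam] t(2) t(3)] t(1) by simp
    moreover have "\<forall>j\<in>{1..K}. l j \<in> means \<Theta> b"
      unfolding l_def using mu_in t(2,3) by (auto simp: means_def)
    ultimately have lA: "l \<in> Alt \<Theta> b K" unfolding Alt_def using a by blast
    have "S l = w 1 / c 1 * kl \<Theta> b (\<mu> 1) (l 1) + w a / c a * kl \<Theta> b (\<mu> a) (l a)"
      using a2 by (intro S2) (auto simp: l_def)
    also have "\<dots> < P + e" unfolding l1 la Pa Fv[OF a2 \<alpha>_def] m_def[symmetric] using t(4) .
    finally show ?thesis using lA by blast
  qed
  have ne: "Alt \<Theta> b K \<noteq> {}" using upper[of 1] by auto
  have bdd: "bdd_below (S ` Alt \<Theta> b K)" using lower by (intro bdd_belowI2) 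
  have ge: "P \<le> (INF l\<in>Alt \<Theta> b K. S l)" using ne lower by (intro cINF_greatest) auto
  have le: "(INF l\<in>Alt \<Theta> b K. S l) \<le> P"
  proof (rule field_le_epsilon)
    fix e :: real assume "e > 0"
    then obtain l where "l \<in> Alt \<Theta> b K" "S l < P + e" using upper by blast
    then show "(INF l\<in>Alt \<Theta> b K. S l) \<le> P + e" using cINF_lower[OF bdd] by fastforce
  qed
  show ?thesis unfolding A P using ge le by simp
qed


theorem proposition3:
  fixes \<Theta> :: "real set" and b :: "real \<Rightarrow> real" and K :: nat
    and c \<mu> :: "nat \<Rightarrow> real"
  assumes fam: "expfam \<Theta> b"
    and K: "K \<ge> 2"
    and mu_in: "\<forall>a\<in>{1..K}. \<mu> a \<in> means \<Theta> b"
    and best: "\<forall>a\<in>{2..K}. \<mu> 1 > \<mu> a"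
    and c_pos: "\<forall>a\<in>{1..K}. c a > 0"
  shows "(\<forall>w\<in>Sigma_K K. alt_obj \<Theta> b K c \<mu> w = pair_obj \<Theta> b K c \<mu> w)
       \<and> Tstar_inv \<Theta> b K c \<mu> = (SUP w\<in>Sigma_K K. pair_obj \<Theta> b K c \<mu> w)
       \<and> wstar \<Theta> b K c \<mu> = {w\<in>Sigma_K K. \<forall>v\<in>Sigma_K K.
                                 pair_obj \<Theta> b K c \<mu> v \<le> pair_obj \<Theta> b K c \<mu> w}"
proof -
  have eq: "\<forall>w\<in>Sigma_K K. alt_obj \<Theta> b K c \<mu> w = pair_obj \<Theta> b K c \<mu> w"
    using main_eq[OF assms] by blast
  have "Tstar_inv \<Theta> b K c \<mu> = (SUP w\<in>Sigma_K K. pair_obj \<Theta> b K c \<mu> w)"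
    unfolding Tstar_inv_def using eq by (intro SUP_cong) auto
  moreover have "wstar \<Theta> b K c \<mu> = {w\<in>Sigma_K K. \<forall>v\<in>Sigma_K K.
                                 pair_obj \<Theta> b K c \<mu> v \<le> pair_obj \<Theta> b K c \<mu> w}"
    unfolding wstar_def using eq by auto
  ultimately show ?thesis using eq by blast
qed

end
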